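(* Let $n\ge 2$, let $\psi\in\mathrm{Aut}(F_n)$, let $\Gamma=F_n/K$ be a finite characteristic quotient of $F_n$, and let $(X,x_1)\to(R_n,* )$ be the associated finite based cover, so that $\pi_1(X,x_1)\cong K$. If the automorphism of $\Gamma$ induced by $\psi$ is not the identity, then the automorphism of $H_1(X,\mathbb{Z})$ induced by $\psi$ is not the identity.
   Context: $F_n$ is the free group of rank $n\ge2$ with a fixed free basis $x_1,\dots,x_n$, identified with $\pi_1(R_n,* )$, where $R_n$ is the wedge of $n$ circles with wedge point $*$. A subgroup $K\le F_n$ is characteristic if $\psi(K)=K$ for all $\psi\in\mathrm{Aut}(F_n)$; then $\Gamma=F_n/K$ is a characteristic quotient and every $\psi\in\mathrm{Aut}(F_n)$ induces an automorphism of $\Gamma$. The based cover associated to a finite-index subgroup $K$ is the connected covering $p:(X,x_1)\to(R_n,* )$ with $p_*\pi_1(X,x_1)=K$; its deck group is $\Gamma$. The action of $\psi$ on $H_1(X,\mathbb{Z})$ is the automorphism of $K^{ab}\cong H_1(X,\mathbb{Z})$ induced by the restriction $\psi|_K:K\to K$ (equivalently, induced by the basepoint-preserving lift to $X$ of a based homotopy equivalence of $R_n$ realizing $\psi$). *)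

theory Defs
  imports "HOL-Algebra.Algebra"
begin

text \<open>The free group F_n on the basis x_0,...,x_(n-1) (letter (i,True) = x_i,
  letter (i,False) = x_i inverse), realised as the group of reduced words.\<close>

type_synonym letter = "nat \<times> bool"

definition letters :: "nat \<Rightarrow> letter set" where
  "letters n = {..<n} \<times> (UNIV :: bool set)"

definition canceling :: "letter \<Rightarrow> letter \<Rightarrow> bool" where
  "canceling a b \<longleftrightarrow> fst a = fst b \<and> snd a \<noteq> snd b"

fun reduced :: "letter list \<Rightarrow> bool" where
  "reduced [] = True"
| "reduced [a] = True"
| "reduced (a # b # ws) = (\<not> canceling a b \<and> reduced (b # ws))"

fun cons_red :: "letter \<Rightarrow> letter list \<Rightarrow> letter list" where
  "cons_red a [] = [a]"
| "cons_red a (b # ws) = (if canceling a b then ws else a # b # ws)"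

definition free_group :: "nat \<Rightarrow> letter list monoid" where
  "free_group n = \<lparr> carrier = {w. set w \<subseteq> letters n \<and> reduced w},
                     monoid.mult = (\<lambda>u v. foldr cons_red u v),
                     one = [] \<rparr>"

definition characteristic :: "('a, 'b) monoid_scheme \<Rightarrow> 'a set \<Rightarrow> bool" where
  "characteristic G K \<longleftrightarrow> subgroup K G \<and> (\<forall>\<phi> \<in> iso G G. \<phi> ` K = K)"

text \<open>The abelianisation K^ab = K/[K,K] of a subgroup K of G
  (this is H_1 of the based cover associated to K).\<close>

definition abelianization :: "('a, 'b) monoid_scheme \<Rightarrow> 'a set \<Rightarrow> 'a set monoid" where
  "abelianization G K = (G\<lparr>carrier := K\<rparr>) Mod (derived G K)"

text \<open>The map induced by psi on a quotient: a coset C is sent to psi ` C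
  (which is the coset of psi(g) when C is the coset of g and psi preserves
  the subgroup being divided out).\<close>

definition induced_on_cosets :: "('a \<Rightarrow> 'a) \<Rightarrow> 'a set \<Rightarrow> 'a set" where
  "induced_on_cosets \<psi> C = \<psi> ` C"

end

theory Submission
  imports Defs
begin


lemma canceling_sym: "canceling a b \<Longrightarrow> canceling b a"
  by (auto simp: canceling_def)

lemma canceling_trans_eq: "canceling a b \<Longrightarrow> canceling b c \<Longrightarrow> a = c"
  by (cases a; cases b; cases c) (auto simp: canceling_def)

lemma reduced_cons: "reduced (a # w) \<Longrightarrow> reduced w"
  by (cases w) auto

lemma reduced_cons_red: "reduced w \<Longrightarrow> reduced (cons_red a w)"
proof (cases w)
  case Nil then show ?thesis by simp
next
  case (Cons b ws)
  assume r: "reduced w"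
  show ?thesis using r Cons by (auto intro: reduced_cons)
qed

lemma reduced_foldr: "reduced v \<Longrightarrow> reduced (foldr cons_red u v)"
  by (induction u) (auto intro: reduced_cons_red)

lemma set_cons_red: "set (cons_red a w) \<subseteq> insert a (set w)"
  by (cases w) auto

lemma set_foldr: "set (foldr cons_red u v) \<subseteq> set u \<union> set v"
  apply (induction u)
   apply simp
  using set_cons_red by fastforce

lemma cons_red_cancel2:
  assumes "canceling a b" "reduced x"
  shows "cons_red a (cons_red b x) = x"
proof (cases x)
  case Nil then show ?thesis using assms by simp
next
  case (Cons c x')
  show ?thesis
  proof (cases "canceling b c")
    case True
    then have "a = c" using assms canceling_trans_eq by blast
    show ?thesis
    proof (cases x')
      case Nil then show ?thesis using Cons True \<open>a = c\<close> by simp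
    next
      case C2: (Cons d x'')
      then have "\<not> canceling c d" using assms(2) Cons by simp
      then show ?thesis using Cons C2 True \<open>a = c\<close> by simp
    qed
  next
    case False
    then show ?thesis using Cons assms by simp
  qed
qed

lemma foldr_cons_red_key:
  assumes "reduced w"
  shows "foldr cons_red (cons_red a v) w = cons_red a (foldr cons_red v w)"
proof (cases v)
  case Nil then show ?thesis by simp
next
  case (Cons b v')
  show ?thesis
  proof (cases "canceling a b")
    case True
    then show ?thesis using Cons cons_red_cancel2[OF True reduced_foldr[OF assms]] by simp
  next
    case False then show ?thesis using Cons by simp
  qed
qed

lemma foldr_assoc:
  assumes "reduced w"
  shows "foldr cons_red (foldr cons_red u v) w = foldr cons_red u (foldr cons_red v w)"
  by (induction u) (simp_all add: foldr_cons_red_key assms)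

definition flipl :: "letter \<Rightarrow> letter" where "flipl l = (fst l, \<not> snd l)"

definition invw :: "letter list \<Rightarrow> letter list" where "invw w = rev (map flipl w)"

lemma canceling_flipl: "canceling (flipl a) a"
  by (simp add: canceling_def flipl_def)

lemma foldr_inv_aux:
  "reduced (u @ v) \<Longrightarrow> foldr cons_red (invw u) (u @ v) = v"
proof (induction u)
  case Nil then show ?case by (simp add: invw_def)
next
  case (Cons a u)
  have "foldr cons_red (invw (a # u)) ((a # u) @ v)
      = foldr cons_red (invw u) (cons_red (flipl a) (a # u @ v))"
    by (simp add: invw_def)
  also have "cons_red (flipl a) (a # u @ v) = u @ v"
    using canceling_flipl by simp
  finally show ?case using Cons reduced_cons by fastforce
qed

lemma reduced_snoc:
  "reduced (w @ [a]) = (reduced w \<and> (w = [] \<or> \<not> canceling (last w) a))"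
  by (induction w rule: reduced.induct) auto

lemma reduced_rev_map_flip: "reduced w \<Longrightarrow> reduced (invw w)"
proof (induction w)
  case Nil then show ?case by (simp add: invw_def)
next
  case (Cons a w)
  have rw: "reduced w" using Cons.prems reduced_cons by blast
  have riw: "reduced (invw w)" using Cons.IH rw by blast
  have ra: "reduced (a # w)" using Cons.prems .
  have iw: "invw (a # w) = invw w @ [flipl a]" by (simp add: invw_def)
  show ?case
  proof (cases w)
    case Nil then show ?thesis by (simp add: invw_def)
  next
    case C: (Cons b w')
    have "\<not> canceling a b" using C ra by simp
    moreover have "invw w = invw w' @ [flipl b]" using C by (simp add: invw_def)
    ultimately have "last (invw w) = flipl b" "\<not> canceling (flipl b) (flipl a)"
      by (auto simp: canceling_def flipl_def)
    then have "reduced (invw w @ [flipl a])"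
      unfolding reduced_snoc using riw by simp
    then show ?thesis using iw by simp
  qed
qed

lemma letters_flipl: "set w \<subseteq> letters n \<Longrightarrow> set (invw w) \<subseteq> letters n"
  by (auto simp: invw_def letters_def flipl_def)

lemma free_group_is_group: "group (free_group n)"
proof (rule groupI)
  fix x y assume "x \<in> carrier (free_group n)" "y \<in> carrier (free_group n)"
  then have "set x \<subseteq> letters n" "set y \<subseteq> letters n" "reduced y"
    by (simp_all add: free_group_def)
  then have "set (foldr cons_red x y) \<subseteq> letters n" "reduced (foldr cons_red x y)"
    using set_foldr[of x y] reduced_foldr[of y x] by blast+
  then show "x \<otimes>\<^bsub>free_group n\<^esub> y \<in> carrier (free_group n)"
    by (simp add: free_group_def)
next
  show "\<one>\<^bsub>free_group n\<^esub> \<in> carrier (free_group n)" by (simp add: free_group_def)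
next
  fix x y z assume "x \<in> carrier (free_group n)" "y \<in> carrier (free_group n)" "z \<in> carrier (free_group n)"
  then show "x \<otimes>\<^bsub>free_group n\<^esub> y \<otimes>\<^bsub>free_group n\<^esub> z = x \<otimes>\<^bsub>free_group n\<^esub> (y \<otimes>\<^bsub>free_group n\<^esub> z)"
    by (simp add: free_group_def foldr_assoc)
next
  fix x assume "x \<in> carrier (free_group n)"
  then show "\<one>\<^bsub>free_group n\<^esub> \<otimes>\<^bsub>free_group n\<^esub> x = x" by (simp add: free_group_def)
next
  fix x assume x: "x \<in> carrier (free_group n)"
  show "\<exists>y\<in>carrier (free_group n). y \<otimes>\<^bsub>free_group n\<^esub> x = \<one>\<^bsub>free_group n\<^esub>"
  proof (intro bexI)
    show "invw x \<otimes>\<^bsub>free_group n\<^esub> x = \<one>\<^bsub>free_group n\<^esub>"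
      using foldr_inv_aux[of x "[]"] x by (simp add: free_group_def)
    show "invw x \<in> carrier (free_group n)"
      using x letters_flipl reduced_rev_map_flip by (auto simp: free_group_def)
  qed
qed




fun cnt :: "nat \<Rightarrow> letter list set \<Rightarrow> letter list \<Rightarrow> letter list set \<times> nat \<Rightarrow> int" where
  "cnt n c [] = (\<lambda>e. 0)"
| "cnt n c (l # w) = (\<lambda>e. (if snd l then (if e = (c, fst l) then 1 else 0)
       else (if e = (c #>\<^bsub>free_group n\<^esub> [l], fst l) then -1 else 0))
       + cnt n (c #>\<^bsub>free_group n\<^esub> [l]) w e)"

locale FG = fixes n :: nat
begin

abbreviation G where "G \<equiv> free_group n"
abbreviation mul (infixl "\<cdot>" 70) where "x \<cdot> y \<equiv> x \<otimes>\<^bsub>G\<^esub> y"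
abbreviation rc (infixl "\<triangleright>" 60) where "c \<triangleright> x \<equiv> c #>\<^bsub>G\<^esub> x"
abbreviation lc (infixr "\<triangleleft>" 60) where "x \<triangleleft> c \<equiv> x <#\<^bsub>G\<^esub> c"

sublocale grp: group G by (rule free_group_is_group)

lemma single_carrier: "a \<in> letters n \<Longrightarrow> [a] \<in> carrier G"
  by (simp add: free_group_def)

lemma mult_eq: "x \<cdot> y = foldr cons_red x y"
  by (simp add: free_group_def)

lemma carrier_letters: "x \<in> carrier G \<Longrightarrow> set x \<subseteq> letters n"
  by (simp add: free_group_def)

lemma carrier_reduced: "x \<in> carrier G \<Longrightarrow> reduced x"
  by (simp add: free_group_def)

lemma one_eq: "\<one>\<^bsub>G\<^esub> = []" by (simp add: free_group_def)

lemma cnt_cons_red: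
  assumes c: "c \<subseteq> carrier G" and a: "a \<in> letters n" and x: "set x \<subseteq> letters n"
  shows "cnt n c (cons_red a x) = cnt n c (a # x)"
proof (cases x)
  case Nil then show ?thesis by simp
next
  case (Cons b x')
  show ?thesis
  proof (cases "canceling a b")
    case False then show ?thesis using Cons by simp
  next
    case True
    have b: "b \<in> letters n" using x Cons by auto
    have ab: "[a] \<cdot> [b] = \<one>\<^bsub>G\<^esub>" using True by (simp add: mult_eq one_eq)
    have cc: "c \<triangleright> [a] \<triangleright> [b] = c"
      using grp.coset_mult_assoc[OF c single_carrier[OF a] single_carrier[OF b]] ab c by simp
    obtain i s where as: "a = (i, s)" by force
    have bs: "b = (i, \<not> s)" using True as by (cases b) (auto simp: canceling_def)
    have cc': "c \<triangleright> [(i,s)] \<triangleright> [(i,\<not>s)] = c" using cc as bs by simp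
    have cr: "cons_red a (b # x') = x'" using True by simp
    show ?thesis
    proof (rule ext)
      fix e
      show "cnt n c (cons_red a x) e = cnt n c (a # x) e"
        unfolding Cons cr as bs using cc' by (cases s) simp_all
    qed
  qed
qed

lemma cnt_foldr:
  assumes "c \<subseteq> carrier G" "set u \<subseteq> letters n" "set v \<subseteq> letters n"
  shows "cnt n c (foldr cons_red u v) = cnt n c (u @ v)"
  using assms
proof (induction u arbitrary: c)
  case Nil then show ?case by simp
next
  case (Cons a u)
  have a: "a \<in> letters n" using Cons by auto
  have "set (foldr cons_red u v) \<subseteq> letters n" using set_foldr[of u v] Cons by auto
  then have "cnt n c (foldr cons_red (a # u) v) = cnt n c (a # foldr cons_red u v)"
    using cnt_cons_red[OF Cons(2) a] by simp
  also have "\<dots> = cnt n c (a # u @ v)"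
    using Cons grp.r_coset_subset_G[OF Cons(2) single_carrier[OF a]] by (simp add: fun_eq_iff)
  finally show ?case by simp
qed

lemma cnt_append:
  "cnt n c (u @ v) e = cnt n c u e + cnt n (fold (\<lambda>l c. c \<triangleright> [l]) u c) v e"
  by (induction u arbitrary: c) auto

lemma fold_end:
  assumes "c \<subseteq> carrier G" "set u \<subseteq> letters n"
  shows "fold (\<lambda>l c. c \<triangleright> [l]) u c = c \<triangleright> foldr cons_red u []"
  using assms
proof (induction u arbitrary: c)
  case Nil
  have "c \<triangleright> [] = c" using grp.coset_mult_one[OF Nil(1)] by (simp add: one_eq)
  then show ?case by simp
next
  case (Cons a u)
  have a: "a \<in> letters n" using Cons by auto
  have r: "foldr cons_red u [] \<in> carrier G"
    using set_foldr[of u "[]"] reduced_foldr[of "[]" u] Cons by (auto simp: free_group_def)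
  have "fold (\<lambda>l c. c \<triangleright> [l]) (a # u) c = (c \<triangleright> [a]) \<triangleright> foldr cons_red u []"
    using Cons grp.r_coset_subset_G[OF Cons(2) single_carrier[OF a]] by simp
  also have "\<dots> = c \<triangleright> ([a] \<cdot> foldr cons_red u [])"
    using grp.coset_mult_assoc[OF Cons(2) single_carrier[OF a] r] .
  finally show ?case by (simp add: mult_eq)
qed

lemma cnt_mult:
  assumes "c \<subseteq> carrier G" "x \<in> carrier G" "y \<in> carrier G"
  shows "cnt n c (x \<cdot> y) e = cnt n c x e + cnt n (c \<triangleright> x) y e"
proof -
  have xr: "foldr cons_red x [] = x" using grp.r_one[OF assms(2)] by (simp add: mult_eq one_eq)
  have "cnt n c (x \<cdot> y) = cnt n c (x @ y)"
    using cnt_foldr assms carrier_letters by (simp add: mult_eq)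
  then show ?thesis
    using cnt_append[of c x y e] fold_end[OF assms(1) carrier_letters[OF assms(2)]] xr by simp
qed

lemma lc_inj:
  assumes "h \<in> carrier G" "c \<subseteq> carrier G" "d \<subseteq> carrier G" "h \<triangleleft> c = h \<triangleleft> d"
  shows "c = d"
proof -
  have "inv\<^bsub>G\<^esub> h \<triangleleft> (h \<triangleleft> c) = inv\<^bsub>G\<^esub> h \<triangleleft> (h \<triangleleft> d)" using assms by simp
  moreover have "inv\<^bsub>G\<^esub> h \<triangleleft> (h \<triangleleft> c) = c"
    using grp.lcos_m_assoc[OF assms(2), of "inv\<^bsub>G\<^esub> h" h] grp.lcos_mult_one[OF assms(2)] assms(1) by simp
  moreover have "inv\<^bsub>G\<^esub> h \<triangleleft> (h \<triangleleft> d) = d"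
    using grp.lcos_m_assoc[OF assms(3), of "inv\<^bsub>G\<^esub> h" h] grp.lcos_mult_one[OF assms(3)] assms(1) by simp
  ultimately show ?thesis by simp
qed

lemma cnt_translate:
  assumes "h \<in> carrier G" "c \<subseteq> carrier G" "d \<subseteq> carrier G" "set w \<subseteq> letters n"
  shows "cnt n (h \<triangleleft> c) w (h \<triangleleft> d, i) = cnt n c w (d, i)"
  using assms(2,4)
proof (induction w arbitrary: c)
  case Nil then show ?case by simp
next
  case (Cons a w)
  have a: "a \<in> letters n" using Cons by auto
  have cs: "c \<triangleright> [a] \<subseteq> carrier G" using grp.r_coset_subset_G[OF Cons(2) single_carrier[OF a]] .
  have e1: "(h \<triangleleft> c) \<triangleright> [a] = h \<triangleleft> (c \<triangleright> [a])"
    using grp.coset_assoc[OF assms(1) single_carrier[OF a] Cons(2)] by simp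
  have IH: "cnt n (h \<triangleleft> (c \<triangleright> [a])) w (h \<triangleleft> d, i) = cnt n (c \<triangleright> [a]) w (d, i)"
    using Cons cs by auto
  have i1: "(h \<triangleleft> d = h \<triangleleft> c) = (d = c)" using lc_inj[OF assms(1) assms(3) Cons(2)] by blast
  have i2: "(h \<triangleleft> d = h \<triangleleft> (c \<triangleright> [a])) = (d = c \<triangleright> [a])" using lc_inj[OF assms(1) assms(3) cs] by blast
  show ?case using IH e1 i1 i2 by simp
qed

end



locale FGK = FG +
  fixes K :: "letter list set"
  assumes normK: "K \<lhd> free_group n"
begin

sublocale nrm: normal K G by (rule normK)

lemma subK: "subgroup K G" using normK by (rule normal_imp_subgroup)

lemma K_carrier: "K \<subseteq> carrier G" using subK subgroup.subset by blast

lemma rcos_K: "k \<in> K \<Longrightarrow> K \<triangleright> k = K"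
  using subgroup.rcos_const[OF subK grp.is_group] by blast

lemma cnt_nil: "cnt n c [] e = 0" by simp

lemma cnt_inv:
  assumes "c \<subseteq> carrier G" "x \<in> carrier G"
  shows "cnt n (c \<triangleright> x) (inv\<^bsub>G\<^esub> x) e = - cnt n c x e"
proof -
  have "cnt n c (x \<cdot> inv\<^bsub>G\<^esub> x) e = cnt n c x e + cnt n (c \<triangleright> x) (inv\<^bsub>G\<^esub> x) e"
    using cnt_mult[OF assms grp.inv_closed[OF assms(2)]] .
  moreover have "x \<cdot> inv\<^bsub>G\<^esub> x = []" using assms(2) by (simp add: one_eq[symmetric])
  ultimately show ?thesis by simp
qed

lemma cnt_K_mult:
  assumes "x \<in> K" "y \<in> K"
  shows "cnt n K (x \<cdot> y) e = cnt n K x e + cnt n K y e"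
  using cnt_mult[OF K_carrier, of x y e] assms K_carrier rcos_K by auto

lemma cnt_K_inv:
  assumes "x \<in> K"
  shows "cnt n K (inv\<^bsub>G\<^esub> x) e = - cnt n K x e"
  using cnt_inv[OF K_carrier, of x e] assms K_carrier rcos_K by auto

lemma derived_zero:
  assumes "d \<in> derived G K"
  shows "d \<in> K \<and> cnt n K d e = 0"
  using assms unfolding derived_def
proof (induction rule: generate.induct)
  case one
  then show ?case using subgroup.one_closed[OF subK] by (simp add: one_eq)
next
  case (incl h)
  then obtain a b where ab: "a \<in> K" "b \<in> K" "h = a \<cdot> b \<cdot> inv\<^bsub>G\<^esub> a \<cdot> inv\<^bsub>G\<^esub> b" by blast
  have i: "inv\<^bsub>G\<^esub> a \<in> K" "inv\<^bsub>G\<^esub> b \<in> K" using ab subgroup.m_inv_closed[OF subK] by auto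
  have m: "a \<cdot> b \<in> K" "a \<cdot> b \<cdot> inv\<^bsub>G\<^esub> a \<in> K" using ab i subgroup.m_closed[OF subK] by auto
  have "h \<in> K" using ab m i subgroup.m_closed[OF subK] by auto
  moreover have "cnt n K h e = 0"
    using ab i m by (simp add: cnt_K_mult cnt_K_inv)
  ultimately show ?case by simp
next
  case (inv h)
  then obtain a b where ab: "a \<in> K" "b \<in> K" "h = a \<cdot> b \<cdot> inv\<^bsub>G\<^esub> a \<cdot> inv\<^bsub>G\<^esub> b" by blast
  have i: "inv\<^bsub>G\<^esub> a \<in> K" "inv\<^bsub>G\<^esub> b \<in> K" using ab subgroup.m_inv_closed[OF subK] by auto
  have m: "a \<cdot> b \<in> K" "a \<cdot> b \<cdot> inv\<^bsub>G\<^esub> a \<in> K" using ab i subgroup.m_closed[OF subK] by auto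
  have hK: "h \<in> K" using ab m i subgroup.m_closed[OF subK] by auto
  have "cnt n K h e = 0"
    using ab i m by (simp add: cnt_K_mult cnt_K_inv)
  then show ?case using hK cnt_K_inv subgroup.m_inv_closed[OF subK hK] by simp
next
  case (eng h1 h2)
  then show ?case using cnt_K_mult subgroup.m_closed[OF subK] by simp
qed

lemma cnt_conj:
  assumes x: "x \<in> carrier G" and k: "k \<in> K"
  shows "cnt n K (x \<cdot> k \<cdot> inv\<^bsub>G\<^esub> x) e = cnt n (x \<triangleleft> K) k e"
proof -
  have kc: "k \<in> carrier G" using k K_carrier by blast
  have xk: "x \<cdot> k \<in> carrier G" using x kc by simp
  have e1: "K \<triangleright> x = x \<triangleleft> K" using nrm.coset_eq x by blast
  have e2: "K \<triangleright> (x \<cdot> k) = K \<triangleright> x"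
  proof -
    have "K \<triangleright> (x \<cdot> k) = (K \<triangleright> x) \<triangleright> k" using grp.coset_mult_assoc[OF K_carrier x kc] by simp
    also have "\<dots> = x \<triangleleft> (K \<triangleright> k)" using e1 grp.coset_assoc[OF x kc K_carrier] by simp
    also have "\<dots> = K \<triangleright> x" using rcos_K[OF k] e1 by simp
    finally show ?thesis .
  qed
  have "cnt n K (x \<cdot> k \<cdot> inv\<^bsub>G\<^esub> x) e
      = cnt n K (x \<cdot> k) e + cnt n (K \<triangleright> (x \<cdot> k)) (inv\<^bsub>G\<^esub> x) e"
    using cnt_mult[OF K_carrier xk, of "inv\<^bsub>G\<^esub> x"] x by simp
  also have "\<dots> = cnt n K x e + cnt n (K \<triangleright> x) k e + cnt n (K \<triangleright> x) (inv\<^bsub>G\<^esub> x) e"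
    using cnt_mult[OF K_carrier x kc] e2 by simp
  also have "\<dots> = cnt n (K \<triangleright> x) k e"
    using cnt_inv[OF K_carrier x] by simp
  finally show ?thesis using e1 by simp
qed

lemma cnt_conj_tr:
  assumes x: "x \<in> carrier G" and k: "k \<in> K" and d: "d \<subseteq> carrier G"
  shows "cnt n K (x \<cdot> k \<cdot> inv\<^bsub>G\<^esub> x) (x \<triangleleft> d, i) = cnt n K k (d, i)"
  using cnt_conj[OF x k] cnt_translate[OF x K_carrier d carrier_letters] k K_carrier by auto

end



context FGK
begin

abbreviation V where "V \<equiv> rcosets\<^bsub>G\<^esub> K"

definition dist :: "letter list set \<Rightarrow> nat" where
  "dist c = (LEAST m. \<exists>w. set w \<subseteq> letters n \<and> length w = m \<and> K \<triangleright> foldr cons_red w [] = c)"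

definition edge :: "letter list set \<Rightarrow> letter \<Rightarrow> letter list set \<times> nat" where
  "edge c l = (if snd l then (c, fst l) else (c \<triangleright> [l], fst l))"

definition pe :: "letter list set \<Rightarrow> letter list set \<times> nat" where
  "pe c = (SOME e. \<exists>c' l. l \<in> letters n \<and> c' \<in> V \<and> dist c' < dist c \<and> c' \<triangleright> [l] = c \<and> e = edge c' l)"

definition Tr where "Tr = pe ` (V - {K})"

lemma red_carrier: "set w \<subseteq> letters n \<Longrightarrow> foldr cons_red w [] \<in> carrier G"
  using set_foldr[of w "[]"] reduced_foldr[of "[]" w] by (auto simp: free_group_def)

lemma red_snoc: "set w \<subseteq> letters n \<Longrightarrow> foldr cons_red (w @ [l]) [] = foldr cons_red w [] \<cdot> [l]"
  using foldr_assoc[of "[l]" w "[]"] by (simp add: mult_eq)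

lemma V_carrier: "c \<in> V \<Longrightarrow> c \<subseteq> carrier G"
  using subgroup.rcosets_carrier[OF subK grp.is_group] by blast

lemma K_in_V: "K \<in> V"
  using grp.rcosetsI[OF K_carrier grp.one_closed] grp.coset_mult_one[OF K_carrier] by simp

lemma V_step: "c \<in> V \<Longrightarrow> x \<in> carrier G \<Longrightarrow> c \<triangleright> x \<in> V"
proof -
  assume "c \<in> V" "x \<in> carrier G"
  then obtain q where q: "q \<in> carrier G" "c = K \<triangleright> q" unfolding RCOSETS_def by blast
  then have "c \<triangleright> x = K \<triangleright> (q \<cdot> x)" using grp.coset_mult_assoc[OF K_carrier q(1) \<open>x \<in> carrier G\<close>] by simp
  then show ?thesis using grp.rcosetsI[OF K_carrier] q \<open>x \<in> carrier G\<close> by simp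
qed

lemma dist_ex:
  assumes "c \<in> V"
  shows "\<exists>w. set w \<subseteq> letters n \<and> length w = dist c \<and> K \<triangleright> foldr cons_red w [] = c"
proof -
  obtain q where q: "q \<in> carrier G" "c = K \<triangleright> q" using assms unfolding RCOSETS_def by blast
  have "foldr cons_red q [] = q" using grp.r_one[OF q(1)] by (simp add: mult_eq one_eq)
  then have "set q \<subseteq> letters n \<and> length q = length q \<and> K \<triangleright> foldr cons_red q [] = c"
    using q carrier_letters[OF q(1)] by simp
  then have "\<exists>m. \<exists>w. set w \<subseteq> letters n \<and> length w = m \<and> K \<triangleright> foldr cons_red w [] = c"
    by blast
  from LeastI_ex[OF this] show ?thesis unfolding dist_def .
qed

lemma dist_le:
  assumes "set w \<subseteq> letters n"
  shows "dist (K \<triangleright> foldr cons_red w []) \<le> length w"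
  unfolding dist_def by (rule Least_le, rule exI[of _ w], simp add: assms)

lemma pe_spec:
  assumes "c \<in> V" "c \<noteq> K"
  shows "\<exists>c' l. l \<in> letters n \<and> c' \<in> V \<and> dist c' < dist c \<and> c' \<triangleright> [l] = c \<and> pe c = edge c' l"
proof -
  obtain w where w: "set w \<subseteq> letters n" "length w = dist c" "K \<triangleright> foldr cons_red w [] = c"
    using dist_ex[OF assms(1)] by blast
  have "w \<noteq> []"
  proof
    assume "w = []"
    then have "c = K \<triangleright> \<one>\<^bsub>G\<^esub>" using w by (simp add: one_eq)
    then show False using assms(2) grp.coset_mult_one[OF K_carrier] by simp
  qed
  then obtain w' l where wl: "w = w' @ [l]" by (cases w rule: rev_exhaust) auto
  have w': "set w' \<subseteq> letters n" and l: "l \<in> letters n" using w(1) wl by auto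
  define c' where "c' = K \<triangleright> foldr cons_red w' []"
  have c'V: "c' \<in> V" unfolding c'_def using grp.rcosetsI[OF K_carrier red_carrier[OF w']] .
  have "dist c' \<le> length w'" unfolding c'_def using dist_le[OF w'] .
  then have dl: "dist c' < dist c" using w(2) wl by simp
  have "c' \<triangleright> [l] = K \<triangleright> (foldr cons_red w' [] \<cdot> [l])"
    unfolding c'_def using grp.coset_mult_assoc[OF K_carrier red_carrier[OF w'] single_carrier[OF l]] .
  also have "\<dots> = c" using w(3) wl red_snoc[OF w'] by simp
  finally have "c' \<triangleright> [l] = c" .
  then have "\<exists>e. \<exists>c' l. l \<in> letters n \<and> c' \<in> V \<and> dist c' < dist c \<and> c' \<triangleright> [l] = c \<and> e = edge c' l"
    using l c'V dl by blast
  from someI_ex[OF this] show ?thesis unfolding pe_def by blast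
qed

lemma paths:
  "c \<in> V \<Longrightarrow> \<exists>p \<in> carrier G. K \<triangleright> p = c \<and> (\<forall>e. e \<notin> Tr \<longrightarrow> cnt n K p e = 0)"
proof (induction "dist c" arbitrary: c rule: less_induct)
  case less
  show ?case
  proof (cases "c = K")
    case True
    then show ?thesis using grp.coset_mult_one[OF K_carrier] grp.one_closed by (auto simp: one_eq)
  next
    case False
    obtain c' l where cl: "l \<in> letters n" "c' \<in> V" "dist c' < dist c" "c' \<triangleright> [l] = c" "pe c = edge c' l"
      using pe_spec[OF less.prems False] by blast
    obtain p' where p': "p' \<in> carrier G" "K \<triangleright> p' = c'" "\<forall>e. e \<notin> Tr \<longrightarrow> cnt n K p' e = 0"
      using less.hyps[OF cl(3) cl(2)] by blast
    have peT: "pe c \<in> Tr" unfolding Tr_def using less.prems False by blast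
    have lc: "[l] \<in> carrier G" using single_carrier[OF cl(1)] .
    show ?thesis
    proof (intro bexI conjI allI impI)
      show "p' \<cdot> [l] \<in> carrier G" using p'(1) lc by simp
      show "K \<triangleright> (p' \<cdot> [l]) = c"
        using grp.coset_mult_assoc[OF K_carrier p'(1) lc] p'(2) cl(4) by simp
      fix e assume e: "e \<notin> Tr"
      have "cnt n K (p' \<cdot> [l]) e = cnt n K p' e + cnt n c' [l] e"
        using cnt_mult[OF K_carrier p'(1) lc] p'(2) by simp
      also have "cnt n c' [l] e = (if e = edge c' l then (if snd l then 1 else -1) else 0)"
        by (simp add: edge_def)
      also have "\<dots> = 0" using e peT cl(5) by auto
      finally show "cnt n K (p' \<cdot> [l]) e = 0" using p'(3) e by simp
    qed
  qed
qed

end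



context FGK
begin

lemma u_moves:
  assumes u: "u \<in> carrier G" "u \<notin> K" and c: "c \<in> V"
  shows "u \<triangleleft> c \<noteq> c"
proof
  assume eq: "u \<triangleleft> c = c"
  obtain q where q: "q \<in> carrier G" "c = K \<triangleright> q" using c unfolding RCOSETS_def by blast
  have "u \<triangleleft> c = (u \<triangleleft> K) \<triangleright> q" using grp.coset_assoc[OF u(1) q(1) K_carrier] q(2) by simp
  also have "\<dots> = (K \<triangleright> u) \<triangleright> q" using nrm.coset_eq u(1) by simp
  also have "\<dots> = K \<triangleright> (u \<cdot> q)" using grp.coset_mult_assoc[OF K_carrier u(1) q(1)] .
  finally have "K \<triangleright> q = K \<triangleright> (u \<cdot> q)" using eq q(2) by simp
  then have "u \<cdot> q \<in> K \<triangleright> q" using grp.repr_independenceD[OF subK, of "u \<cdot> q" q] u(1) q(1) by simp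
  then have "(u \<cdot> q) \<cdot> inv\<^bsub>G\<^esub> q \<in> K" using subgroup.rcos_module_imp[OF subK grp.is_group q(1)] by blast
  then show False using u q(1) by (simp add: grp.m_assoc)
qed

lemma contra:
  assumes fin: "finite V" and n2: "2 \<le> n" and u: "u \<in> carrier G" "u \<notin> K"
    and inv: "\<And>k c i. k \<in> K \<Longrightarrow> c \<in> V \<Longrightarrow> cnt n K k (u \<triangleleft> c, i) = cnt n K k (c, i)"
  shows False
proof -
  have "\<forall>c\<in>V. \<exists>p. p \<in> carrier G \<and> K \<triangleright> p = c \<and> (\<forall>e. e \<notin> Tr \<longrightarrow> cnt n K p e = 0)"
    using paths by blast
  then obtain P where P: "\<And>c. c \<in> V \<Longrightarrow> P c \<in> carrier G \<and> K \<triangleright> P c = c \<and> (\<forall>e. e \<notin> Tr \<longrightarrow> cnt n K (P c) e = 0)"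
    by metis
  define N where "N = (V \<times> {..<n}) - Tr"
  define \<sigma> where "\<sigma> = (\<lambda>(c::letter list set, i::nat). (u \<triangleleft> c, i))"
  have sub: "\<sigma> ` N \<subseteq> Tr"
  proof
    fix e' assume "e' \<in> \<sigma> ` N"
    then obtain c i where ci: "(c, i) \<in> N" "e' = (u \<triangleleft> c, i)" unfolding \<sigma>_def by auto
    have cV: "c \<in> V" and il: "i < n" and nT: "(c, i) \<notin> Tr" using ci unfolding N_def by auto
    define x where "x = [(i, True)]"
    have xc: "x \<in> carrier G" unfolding x_def using il by (intro single_carrier) (simp add: letters_def)
    define c' where "c' = c \<triangleright> x"
    have c'V: "c' \<in> V" unfolding c'_def using V_step[OF cV xc] .
    have Pc: "P c \<in> carrier G" "K \<triangleright> P c = c" "\<forall>e. e \<notin> Tr \<longrightarrow> cnt n K (P c) e = 0" using P[OF cV] by auto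
    have Pc': "P c' \<in> carrier G" "K \<triangleright> P c' = c'" "\<forall>e. e \<notin> Tr \<longrightarrow> cnt n K (P c') e = 0" using P[OF c'V] by auto
    have Px: "P c \<cdot> x \<in> carrier G" using Pc(1) xc by simp
    have e1: "K \<triangleright> (P c \<cdot> x) = c'"
      using grp.coset_mult_assoc[OF K_carrier Pc(1) xc] Pc(2) unfolding c'_def by simp
    have "P c \<cdot> x \<in> K \<triangleright> P c'"
      using grp.repr_independenceD[OF subK Px] e1 Pc'(2) by simp
    then have LK: "P c \<cdot> x \<cdot> inv\<^bsub>G\<^esub> (P c') \<in> K"
      using subgroup.rcos_module_imp[OF subK grp.is_group Pc'(1)] by blast
    have val: "cnt n K (P c \<cdot> x \<cdot> inv\<^bsub>G\<^esub> (P c')) e = cnt n K (P c) e + cnt n c x e - cnt n K (P c') e" for e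
    proof -
      have "cnt n K (P c \<cdot> x \<cdot> inv\<^bsub>G\<^esub> (P c')) e
          = cnt n K (P c \<cdot> x) e + cnt n (K \<triangleright> (P c \<cdot> x)) (inv\<^bsub>G\<^esub> (P c')) e"
        using cnt_mult[OF K_carrier Px grp.inv_closed[OF Pc'(1)]] .
      also have "cnt n K (P c \<cdot> x) e = cnt n K (P c) e + cnt n c x e"
        using cnt_mult[OF K_carrier Pc(1) xc] Pc(2) by simp
      also have "cnt n (K \<triangleright> (P c \<cdot> x)) (inv\<^bsub>G\<^esub> (P c')) e = - cnt n K (P c') e"
        using cnt_inv[OF K_carrier Pc'(1)] e1 Pc'(2) by simp
      finally show ?thesis by simp
    qed
    have "cnt n K (P c \<cdot> x \<cdot> inv\<^bsub>G\<^esub> (P c')) (c, i) = 1"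
      using val[of "(c, i)"] Pc(3) Pc'(3) nT by (simp add: x_def)
    then have v1: "cnt n K (P c \<cdot> x \<cdot> inv\<^bsub>G\<^esub> (P c')) (u \<triangleleft> c, i) = 1"
      using inv[OF LK cV] by simp
    show "e' \<in> Tr"
    proof (rule ccontr)
      assume "e' \<notin> Tr"
      then have "(u \<triangleleft> c, i) \<notin> Tr" using ci by simp
      moreover have "u \<triangleleft> c \<noteq> c" using u_moves[OF u cV] .
      ultimately have "cnt n K (P c \<cdot> x \<cdot> inv\<^bsub>G\<^esub> (P c')) (u \<triangleleft> c, i) = 0"
        using val[of "(u \<triangleleft> c, i)"] Pc(3) Pc'(3) by (simp add: x_def)
      then show False using v1 by simp
    qed
  qed
  have inj: "inj_on \<sigma> N"
  proof (rule inj_onI)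
    fix a b assume "a \<in> N" "b \<in> N" "\<sigma> a = \<sigma> b"
    moreover obtain c i c' i' where "a = (c, i)" "b = (c', i')" by force
    ultimately show "a = b" using lc_inj[OF u(1)] V_carrier unfolding N_def \<sigma>_def by auto
  qed
  have finT: "finite Tr" unfolding Tr_def using fin by simp
  have "card N \<le> card Tr" using card_inj_on_le[OF inj sub finT] .
  moreover have "card Tr \<le> card V - 1"
    unfolding Tr_def using card_image_le[of "V - {K}" pe] fin card_Diff_singleton[OF K_in_V] by simp
  moreover have "card (V \<times> {..<n}) - card Tr \<le> card N"
    unfolding N_def using diff_card_le_card_Diff[OF finT] .
  moreover have "card (V \<times> {..<n}) = card V * n" by (simp add: card_cartesian_product)
  moreover have "card V \<ge> 1" using fin K_in_V by (metis One_nat_def Suc_leI card_gt_0_iff empty_iff)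
  moreover have "card V * 2 \<le> card V * n" using n2 by simp
  ultimately show False by linarith
qed

end



context FGK
begin

lemma main:
  assumes fin: "finite V" and n2: "2 \<le> n" and psi: "\<psi> \<in> iso G G"
    and g: "g \<in> carrier G" and neq: "K \<triangleright> \<psi> g \<noteq> K \<triangleright> g"
    and fixd: "\<And>k. k \<in> K \<Longrightarrow> \<exists>d\<in>derived G K. \<psi> k = d \<cdot> k"
  shows False
proof -
  have ph: "group_hom G G \<psi>" using psi grp.is_group
    by (simp add: group_hom_def group_hom_axioms_def iso_def)
  have psiK: "\<psi> k \<in> K" if k: "k \<in> K" for k
  proof -
    obtain d where d: "d \<in> derived G K" "\<psi> k = d \<cdot> k" using fixd[OF k] by blast
    have "d \<in> K" using derived_zero[OF d(1)] by simp
    then show ?thesis using d(2) subgroup.m_closed[OF subK _ k] by simp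
  qed
  have S1: "cnt n K (\<psi> k) e = cnt n K k e" if k: "k \<in> K" for k e
  proof -
    obtain d where d: "d \<in> derived G K" "\<psi> k = d \<cdot> k" using fixd[OF k] by blast
    have dK: "d \<in> K" "cnt n K d e = 0" using derived_zero[OF d(1)] by auto
    show ?thesis using d(2) cnt_K_mult[OF dK(1) k] dK(2) by simp
  qed
  define h where "h = \<psi> g"
  have hc: "h \<in> carrier G" unfolding h_def using group_hom.hom_closed[OF ph g] .
  have S3: "cnt n K (g \<cdot> k \<cdot> inv\<^bsub>G\<^esub> g) (h \<triangleleft> d, i) = cnt n K (g \<cdot> k \<cdot> inv\<^bsub>G\<^esub> g) (g \<triangleleft> d, i)"
    if k: "k \<in> K" and d: "d \<subseteq> carrier G" for k d i
  proof -
    have kc: "k \<in> carrier G" using k K_carrier by blast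
    have gk: "g \<cdot> k \<cdot> inv\<^bsub>G\<^esub> g \<in> K" using nrm.inv_op_closed2[OF g k] .
    have gkc: "g \<cdot> k \<in> carrier G" using g kc by simp
    have "\<psi> (g \<cdot> k \<cdot> inv\<^bsub>G\<^esub> g) = \<psi> (g \<cdot> k) \<cdot> \<psi> (inv\<^bsub>G\<^esub> g)"
      using group_hom.hom_mult[OF ph gkc grp.inv_closed[OF g]] .
    also have "\<dots> = h \<cdot> \<psi> k \<cdot> inv\<^bsub>G\<^esub> h"
      using group_hom.hom_mult[OF ph g kc] group_hom.hom_inv[OF ph g] unfolding h_def by simp
    finally have eqp: "\<psi> (g \<cdot> k \<cdot> inv\<^bsub>G\<^esub> g) = h \<cdot> \<psi> k \<cdot> inv\<^bsub>G\<^esub> h" .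
    have "cnt n K (g \<cdot> k \<cdot> inv\<^bsub>G\<^esub> g) (h \<triangleleft> d, i) = cnt n K (\<psi> (g \<cdot> k \<cdot> inv\<^bsub>G\<^esub> g)) (h \<triangleleft> d, i)"
      using S1[OF gk] by simp
    also have "\<dots> = cnt n K (h \<cdot> \<psi> k \<cdot> inv\<^bsub>G\<^esub> h) (h \<triangleleft> d, i)" using eqp by simp
    finally have "cnt n K (g \<cdot> k \<cdot> inv\<^bsub>G\<^esub> g) (h \<triangleleft> d, i) = cnt n K (h \<cdot> \<psi> k \<cdot> inv\<^bsub>G\<^esub> h) (h \<triangleleft> d, i)" .
    also have "\<dots> = cnt n K (\<psi> k) (d, i)" using cnt_conj_tr[OF hc psiK[OF k] d] .
    also have "\<dots> = cnt n K k (d, i)" using S1[OF k] .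
    also have "\<dots> = cnt n K (g \<cdot> k \<cdot> inv\<^bsub>G\<^esub> g) (g \<triangleleft> d, i)" using cnt_conj_tr[OF g k d] by simp
    finally show ?thesis .
  qed
  define u where "u = h \<cdot> inv\<^bsub>G\<^esub> g"
  have uc: "u \<in> carrier G" unfolding u_def using hc g by simp
  have uK: "u \<notin> K"
  proof
    assume "u \<in> K"
    have "h = u \<cdot> g" unfolding u_def using hc g by (simp add: grp.m_assoc)
    then have "K \<triangleright> h = (K \<triangleright> u) \<triangleright> g" using grp.coset_mult_assoc[OF K_carrier uc g] by simp
    then have "K \<triangleright> h = K \<triangleright> g" using rcos_K[OF \<open>u \<in> K\<close>] by simp
    then show False using neq unfolding h_def by simp
  qed
  have inv: "cnt n K k (u \<triangleleft> c, i) = cnt n K k (c, i)" if k: "k \<in> K" and c: "c \<in> V" for k c i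
  proof -
    have cc: "c \<subseteq> carrier G" using V_carrier[OF c] .
    define k0 where "k0 = inv\<^bsub>G\<^esub> g \<cdot> k \<cdot> g"
    have k0K: "k0 \<in> K" unfolding k0_def using nrm.inv_op_closed1[OF g k] .
    have kc: "k \<in> carrier G" using k K_carrier by blast
    have a1: "g \<cdot> (inv\<^bsub>G\<^esub> g \<cdot> k) = k" using g kc by (simp add: grp.m_assoc[symmetric])
    have kk: "g \<cdot> k0 \<cdot> inv\<^bsub>G\<^esub> g = k" unfolding k0_def using g kc a1 by (simp add: grp.m_assoc)
    define d where "d = inv\<^bsub>G\<^esub> g \<triangleleft> c"
    have dc: "d \<subseteq> carrier G" unfolding d_def using grp.l_coset_subset_G[OF cc] g by simp
    have gd: "g \<triangleleft> d = c" unfolding d_def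
      using grp.lcos_m_assoc[OF cc g grp.inv_closed[OF g]] grp.lcos_mult_one[OF cc] g by simp
    have hd: "h \<triangleleft> d = u \<triangleleft> c" unfolding d_def u_def
      using grp.lcos_m_assoc[OF cc hc grp.inv_closed[OF g]] by simp
    show ?thesis using S3[OF k0K dc, of i] kk gd hd by simp
  qed
  show False using contra[OF fin n2 uc uK inv] by blast
qed

end

lemma normal_of_char:
  assumes "characteristic (free_group n) K"
  shows "K \<lhd> free_group n"
proof -
  interpret grp: group "free_group n" by (rule free_group_is_group)
  have sub: "subgroup K (free_group n)" using assms unfolding characteristic_def by (rule conjunct1)
  have "x \<otimes>\<^bsub>free_group n\<^esub> h \<otimes>\<^bsub>free_group n\<^esub> inv\<^bsub>free_group n\<^esub> x \<in> K"
    if x: "x \<in> carrier (free_group n)" and h: "h \<in> K" for x h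
  proof -
    define \<phi> where "\<phi> = (\<lambda>y\<in>carrier (free_group n). x \<otimes>\<^bsub>free_group n\<^esub> y \<otimes>\<^bsub>free_group n\<^esub> inv\<^bsub>free_group n\<^esub> x)"
    have cz: "inv\<^bsub>free_group n\<^esub> x \<otimes>\<^bsub>free_group n\<^esub> (x \<otimes>\<^bsub>free_group n\<^esub> z) = z"
      if "z \<in> carrier (free_group n)" for z using that x by (simp add: grp.m_assoc[symmetric])
    have hm: "x \<otimes>\<^bsub>free_group n\<^esub> a \<otimes>\<^bsub>free_group n\<^esub> inv\<^bsub>free_group n\<^esub> x \<otimes>\<^bsub>free_group n\<^esub> (x \<otimes>\<^bsub>free_group n\<^esub> b \<otimes>\<^bsub>free_group n\<^esub> inv\<^bsub>free_group n\<^esub> x)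
        = x \<otimes>\<^bsub>free_group n\<^esub> (a \<otimes>\<^bsub>free_group n\<^esub> b) \<otimes>\<^bsub>free_group n\<^esub> inv\<^bsub>free_group n\<^esub> x"
      if "a \<in> carrier (free_group n)" "b \<in> carrier (free_group n)" for a b
      using that x by (simp add: grp.m_assoc cz)
    have "\<phi> \<in> hom (free_group n) (free_group n)"
      unfolding hom_def \<phi>_def using x hm by auto
    moreover have "bij_betw \<phi> (carrier (free_group n)) (carrier (free_group n))"
      unfolding \<phi>_def using grp.conjugation_is_bij[OF x] .
    ultimately have isoph: "\<phi> \<in> iso (free_group n) (free_group n)" by (simp add: iso_def)
    have allc: "\<forall>\<phi>\<in>iso (free_group n) (free_group n). \<phi> ` K = K"
      using assms unfolding characteristic_def by (rule conjunct2)
    have "\<phi> ` K = K" using bspec[OF allc isoph] .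
    moreover have "h \<in> carrier (free_group n)" using subgroup.mem_carrier[OF sub h] .
    ultimately have "\<phi> h \<in> K" using imageI[of h K \<phi>] h by simp
    then show ?thesis unfolding \<phi>_def using \<open>h \<in> carrier (free_group n)\<close> by simp
  qed
  then show ?thesis using grp.normal_inv_iff sub by blast
qed




theorem proposition1p1:
  fixes n :: nat and \<psi> :: "letter list \<Rightarrow> letter list" and K :: "letter list set"
  assumes "n \<ge> 2"
    and "\<psi> \<in> iso (free_group n) (free_group n)"
    and "characteristic (free_group n) K"
    and "finite (carrier (free_group n Mod K))"
    and "\<exists>C \<in> carrier (free_group n Mod K). induced_on_cosets \<psi> C \<noteq> C"
  shows "\<exists>C \<in> carrier (abelianization (free_group n) K). induced_on_cosets \<psi> C \<noteq> C"
proof (rule ccontr)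
  assume nc: "\<not> (\<exists>C \<in> carrier (abelianization (free_group n) K). induced_on_cosets \<psi> C \<noteq> C)"
  have nK: "K \<lhd> free_group n" using normal_of_char[OF assms(3)] .
  interpret F: FGK n K using nK by (simp add: FGK_def)
  have fin: "finite (rcosets\<^bsub>free_group n\<^esub> K)" using assms(4) by (simp add: FactGroup_def)
  have allc: "\<forall>\<phi>\<in>iso (free_group n) (free_group n). \<phi> ` K = K"
    using assms(3) unfolding characteristic_def by (rule conjunct2)
  have psiK: "\<psi> ` K = K" using bspec[OF allc assms(2)] .
  have ph: "group_hom (free_group n) (free_group n) \<psi>" using assms(2) F.grp.is_group
    by (simp add: group_hom_def group_hom_axioms_def iso_def)
  obtain C where C: "C \<in> rcosets\<^bsub>free_group n\<^esub> K" "\<psi> ` C \<noteq> C"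
    using assms(5) by (auto simp: FactGroup_def induced_on_cosets_def)
  then obtain g where g: "g \<in> carrier (free_group n)" "C = K #>\<^bsub>free_group n\<^esub> g"
    unfolding RCOSETS_def by blast
  have img: "\<psi> ` (K #>\<^bsub>free_group n\<^esub> g) = K #>\<^bsub>free_group n\<^esub> \<psi> g"
  proof -
    have rc: "K #>\<^bsub>free_group n\<^esub> g = (\<lambda>h. h \<otimes>\<^bsub>free_group n\<^esub> g) ` K"
      unfolding r_coset_def by auto
    have "\<psi> ` (K #>\<^bsub>free_group n\<^esub> g) = (\<lambda>h. \<psi> (h \<otimes>\<^bsub>free_group n\<^esub> g)) ` K"
      unfolding rc by (simp add: image_image)
    also have "\<dots> = (\<lambda>k. \<psi> k \<otimes>\<^bsub>free_group n\<^esub> \<psi> g) ` K"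
    proof (rule image_cong)
      fix h assume "h \<in> K"
      then have "h \<in> carrier (free_group n)" using F.K_carrier by blast
      then show "\<psi> (h \<otimes>\<^bsub>free_group n\<^esub> g) = \<psi> h \<otimes>\<^bsub>free_group n\<^esub> \<psi> g"
        using group_hom.hom_mult[OF ph _ g(1)] by blast
    qed simp
    also have "\<dots> = (\<lambda>y. y \<otimes>\<^bsub>free_group n\<^esub> \<psi> g) ` (\<psi> ` K)" by (simp add: image_image)
    also have "\<dots> = K #>\<^bsub>free_group n\<^esub> \<psi> g" unfolding psiK r_coset_def by auto
    finally show ?thesis .
  qed
  have neq: "K #>\<^bsub>free_group n\<^esub> \<psi> g \<noteq> K #>\<^bsub>free_group n\<^esub> g" using C(2) g(2) img by simp
  have fixd: "\<exists>d\<in>derived (free_group n) K. \<psi> k = d \<otimes>\<^bsub>free_group n\<^esub> k" if k: "k \<in> K" for k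
  proof -
    define C' where "C' = derived (free_group n) K #>\<^bsub>free_group n\<^esub> k"
    have "C' \<in> carrier (abelianization (free_group n) K)"
      unfolding C'_def abelianization_def FactGroup_def RCOSETS_def r_coset_def using k by auto
    then have eq: "\<psi> ` C' = C'" using nc by (auto simp: induced_on_cosets_def)
    have one: "\<one>\<^bsub>free_group n\<^esub> \<in> derived (free_group n) K" unfolding derived_def by (rule generate.one)
    have kc: "k \<in> carrier (free_group n)" using k F.K_carrier by blast
    have "k \<in> C'" unfolding C'_def r_coset_def using one kc by force
    then have "\<psi> k \<in> C'" using eq by blast
    then show ?thesis unfolding C'_def r_coset_def by blast
  qed
  show False using F.main[OF fin assms(1) assms(2) g(1) neq fixd] by blast
qed



end
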